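(* Let $p_\tau(\mathbf x)=\sum_{k=1}^K w_k\mathcal N(\mathbf x;\boldsymbol\mu_k,\sigma_\tau^2I_d)$ with $w_k>0$, $\sum w_k=1$, and let $\mathbf J(\mathbf x,\tau)=\nabla\nabla\log p_\tau(\mathbf x)$ be the score Jacobian. Let $\bar{\mathbf x}=\sum_kw_k\boldsymbol\mu_k$, $\boldsymbol\nu_k=\boldsymbol\mu_k-\bar{\mathbf x}$, $\mathbf W=\sum_kw_k\boldsymbol\nu_k\boldsymbol\nu_k^\top$, $\mathbf Q=\sum_kw_k|\boldsymbol\nu_k|^2\boldsymbol\nu_k\boldsymbol\nu_k^\top$ and $\langle d^2\rangle=\sum_kw_k|\boldsymbol\nu_k|^2$. Then as $\sigma_\tau^2\to\infty$, $$\mathbf J(\bar{\mathbf x},\tau)=-\frac{I}{\sigma_\tau^2}+\frac{\mathbf W}{\sigma_\tau^4}+\frac{\langle d^2\rangle\mathbf W-\mathbf Q}{2\sigma_\tau^6}+O(\sigma_\tau^{-8}).$$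
   Context: $\mathcal N(\mathbf x;\boldsymbol\mu,\Sigma)$ is the Gaussian density; $\mathbf W$ is the between-class covariance and $\mathbf Q$ the distance-weighted covariance. *)

theory Defs
  imports "HOL-Analysis.Analysis"
begin

(* Isotropic Gaussian density N(x; mu, s I_d) on R^d, d = CARD('d), s = sigma^2 > 0 *)
definition gauss_iso :: "real ^ 'd \<Rightarrow> real ^ 'd \<Rightarrow> real \<Rightarrow> real" where
  "gauss_iso x mu s = (2 * pi * s) powr (- real CARD('d) / 2) * exp (- (norm (x - mu))\<^sup>2 / (2 * s))"

definition gmix :: "('k::finite \<Rightarrow> real) \<Rightarrow> ('k \<Rightarrow> real ^ 'd) \<Rightarrow> real \<Rightarrow> real ^ 'd \<Rightarrow> real" where
  "gmix w mu s x = (\<Sum>k\<in>UNIV. w k * gauss_iso x (mu k) s)"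

definition grad :: "(real ^ 'd \<Rightarrow> real) \<Rightarrow> real ^ 'd \<Rightarrow> real ^ 'd" where
  "grad f x = (\<chi> i. frechet_derivative f (at x) (axis i 1))"

definition hessian :: "(real ^ 'd \<Rightarrow> real) \<Rightarrow> real ^ 'd \<Rightarrow> real ^ 'd ^ 'd" where
  "hessian f x = (\<chi> i j. frechet_derivative (\<lambda>y. grad f y $ i) (at x) (axis j 1))"

definition outer :: "real ^ 'd \<Rightarrow> real ^ 'd \<Rightarrow> real ^ 'd ^ 'd" where
  "outer u v = (\<chi> i j. u $ i * v $ j)"

end

theory Submission
  imports Defs "HOL-Real_Asymp.Real_Asymp"
begin

lemma gmix_eq:
  fixes w :: "'k::finite \<Rightarrow> real" and mu :: "'k \<Rightarrow> real ^ 'd"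
  shows "gmix w mu s x = (2 * pi * s) powr (- real CARD('d) / 2) *
     (\<Sum>k\<in>UNIV. w k * exp (- ((x - mu k) \<bullet> (x - mu k)) / (2 * s)))"
  unfolding gmix_def gauss_iso_def
  by (simp add: sum_distrib_left power2_norm_eq_inner algebra_simps)

lemma D_g:
  fixes m y :: "real ^ 'd"
  assumes "s \<noteq> 0"
  shows "((\<lambda>x. exp (- ((x - m) \<bullet> (x - m)) / (2 * s))) has_derivative
     (\<lambda>h. exp (- ((y - m) \<bullet> (y - m)) / (2 * s)) * (- (h \<bullet> (y - m)) / s))) (at y)"
  apply (rule derivative_eq_intros refl)+
  using assms apply (auto simp: inner_commute field_simps)
  done

lemma D_Z:
  fixes mu :: "'k::finite \<Rightarrow> real ^ 'd"
  assumes "s \<noteq> 0"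
  shows "((\<lambda>x. \<Sum>k\<in>UNIV. w k * exp (- ((x - mu k) \<bullet> (x - mu k)) / (2 * s))) has_derivative
     (\<lambda>h. \<Sum>k\<in>UNIV. w k * (exp (- ((y - mu k) \<bullet> (y - mu k)) / (2 * s)) * (- (h \<bullet> (y - mu k)) / s)))) (at y)"
  by (intro has_derivative_sum has_derivative_mult_right D_g assms)

lemma grad_eq:
  fixes w :: "'k::finite \<Rightarrow> real" and mu :: "'k \<Rightarrow> real ^ 'd"
  assumes wpos: "\<And>k. w k > 0" and s: "s > 0"
  shows "grad (\<lambda>x. ln (gmix w mu s x)) y =
     (\<chi> i. - (\<Sum>k\<in>UNIV. w k * exp (- ((y - mu k) \<bullet> (y - mu k)) / (2 * s)) * (y $ i - mu k $ i))
        / (s * (\<Sum>k\<in>UNIV. w k * exp (- ((y - mu k) \<bullet> (y - mu k)) / (2 * s)))))"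
proof -
  define c where "c = (2 * pi * s) powr (- real CARD('d) / 2)"
  have c: "c > 0" using s by (simp add: c_def)
  define Z where "Z = (\<lambda>x. \<Sum>k\<in>UNIV. w k * exp (- ((x - mu k) \<bullet> (x - mu k)) / (2 * s)))"
  have Zpos: "Z x > 0" for x
    unfolding Z_def by (rule sum_pos) (auto intro: mult_pos_pos wpos)
  have f: "(\<lambda>x. ln (gmix w mu s x)) = (\<lambda>x. ln (c * Z x))"
    by (simp add: gmix_eq c_def Z_def)
  have DZ: "(Z has_derivative
     (\<lambda>h. \<Sum>k\<in>UNIV. w k * (exp (- ((y - mu k) \<bullet> (y - mu k)) / (2 * s)) * (- (h \<bullet> (y - mu k)) / s)))) (at y)"
    unfolding Z_def using s by (intro D_Z) simp
  have D: "((\<lambda>x. ln (c * Z x)) has_derivative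
      (\<lambda>h. (c * (\<Sum>k\<in>UNIV. w k * (exp (- ((y - mu k) \<bullet> (y - mu k)) / (2 * s)) * (- (h \<bullet> (y - mu k)) / s))))
        * inverse (c * Z y))) (at y)"
    by (rule has_derivative_ln) (use c Zpos DZ in \<open>auto intro: has_derivative_mult_right\<close>)
  have e: "(\<Sum>k\<in>UNIV. w k * (exp (- ((y - mu k) \<bullet> (y - mu k)) / (2 * s)) * (- (axis i 1 \<bullet> (y - mu k)) / s)))
     = - (\<Sum>k\<in>UNIV. w k * exp (- ((y - mu k) \<bullet> (y - mu k)) / (2 * s)) * (y $ i - mu k $ i)) / s" for i
  proof -
    define E where "E = (\<lambda>k. exp (- ((y - mu k) \<bullet> (y - mu k)) / (2 * s)))"
    have "(\<Sum>k\<in>UNIV. w k * (E k * (- (axis i 1 \<bullet> (y - mu k)) / s))) = (\<Sum>k\<in>UNIV. - (w k * E k * (y $ i - mu k $ i)) / s)"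
      by (rule sum.cong) (simp_all add: inner_axis' algebra_simps)
    also have "\<dots> = - (\<Sum>k\<in>UNIV. w k * E k * (y $ i - mu k $ i)) / s"
      by (simp add: sum_divide_distrib sum_negf)
    finally show ?thesis unfolding E_def .
  qed
  show ?thesis
    unfolding grad_def f frechet_derivative_at[OF D, symmetric] e
    using c Zpos[of y] s
    by (simp add: vec_eq_iff Z_def field_simps)
qed

lemma D_N:
  fixes mu :: "'k::finite \<Rightarrow> real ^ 'd"
  assumes "s \<noteq> 0"
  shows "((\<lambda>x. \<Sum>k\<in>UNIV. w k * exp (- ((x - mu k) \<bullet> (x - mu k)) / (2 * s)) * (x $ i - mu k $ i)) has_derivative
     (\<lambda>h. \<Sum>k\<in>UNIV. w k * (exp (- ((y - mu k) \<bullet> (y - mu k)) / (2 * s)) * (- (h \<bullet> (y - mu k)) / s) * (y $ i - mu k $ i)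
        + exp (- ((y - mu k) \<bullet> (y - mu k)) / (2 * s)) * h $ i))) (at y)"
proof (intro has_derivative_sum)
  fix k
  have 1: "((\<lambda>x. x $ i - mu k $ i) has_derivative (\<lambda>h. h $ i)) (at y)"
    by (rule derivative_eq_intros bounded_linear.has_derivative[OF bounded_linear_vec_nth] refl)+ simp
  show "((\<lambda>x. w k * exp (- ((x - mu k) \<bullet> (x - mu k)) / (2 * s)) * (x $ i - mu k $ i)) has_derivative
     (\<lambda>h. w k * (exp (- ((y - mu k) \<bullet> (y - mu k)) / (2 * s)) * (- (h \<bullet> (y - mu k)) / s) * (y $ i - mu k $ i)
        + exp (- ((y - mu k) \<bullet> (y - mu k)) / (2 * s)) * h $ i))) (at y)"
    using has_derivative_mult_right[OF has_derivative_mult[OF D_g[OF assms, where m="mu k" and y=y] 1], of "w k"]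
    by (simp add: algebra_simps mult.assoc)
qed


lemma hess_eq:
  fixes w :: "'k::finite \<Rightarrow> real" and mu :: "'k \<Rightarrow> real ^ 'd" and y :: "real ^ 'd"
  assumes wpos: "\<And>k. w k > 0" and s: "s > 0"
  defines "E \<equiv> (\<lambda>k. exp (- ((y - mu k) \<bullet> (y - mu k)) / (2 * s)))"
  shows "hessian (\<lambda>x. ln (gmix w mu s x)) y $ i $ j =
     - (if i = j then 1 else 0) / s +
     ((\<Sum>k\<in>UNIV. w k * E k * (y - mu k) $ i * (y - mu k) $ j) * (\<Sum>k\<in>UNIV. w k * E k)
      - (\<Sum>k\<in>UNIV. w k * E k * (y - mu k) $ i) * (\<Sum>k\<in>UNIV. w k * E k * (y - mu k) $ j))
     / (s^2 * (\<Sum>k\<in>UNIV. w k * E k)^2)"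
proof -
  define Z where "Z = (\<lambda>x. \<Sum>k\<in>UNIV. w k * exp (- ((x - mu k) \<bullet> (x - mu k)) / (2 * s)))"
  define N where "N = (\<lambda>x. \<Sum>k\<in>UNIV. w k * exp (- ((x - mu k) \<bullet> (x - mu k)) / (2 * s)) * (x $ i - mu k $ i))"
  have Zpos: "Z x > 0" for x
    unfolding Z_def by (rule sum_pos) (auto intro: mult_pos_pos wpos)
  have g: "(\<lambda>y. grad (\<lambda>x. ln (gmix w mu s x)) y $ i) = (\<lambda>y. - (N y / (s * Z y)))"
    by (simp add: grad_eq[OF wpos s] N_def Z_def)
  have DZ: "(Z has_derivative
     (\<lambda>h. \<Sum>k\<in>UNIV. w k * (E k * (- (h \<bullet> (y - mu k)) / s)))) (at y)"
    unfolding Z_def E_def using s by (intro D_Z) simp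
  have DN: "(N has_derivative
     (\<lambda>h. \<Sum>k\<in>UNIV. w k * (E k * (- (h \<bullet> (y - mu k)) / s) * (y $ i - mu k $ i)
        + E k * h $ i))) (at y)"
    unfolding N_def E_def using s by (intro D_N) simp
  have D: "((\<lambda>y. - (N y / (s * Z y))) has_derivative
      (\<lambda>h. - (((\<Sum>k\<in>UNIV. w k * (E k * (- (h \<bullet> (y - mu k)) / s) * (y $ i - mu k $ i) + E k * h $ i)) * (s * Z y)
         - N y * (s * (\<Sum>k\<in>UNIV. w k * (E k * (- (h \<bullet> (y - mu k)) / s))))) / ((s * Z y) * (s * Z y))))) (at y)"
    using s Zpos[of y]
    by (intro has_derivative_minus has_derivative_divide' DN has_derivative_mult_right DZ) simp
  define Z0 where "Z0 = (\<Sum>k\<in>UNIV. w k * E k)"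
  define S1i where "S1i = (\<Sum>k\<in>UNIV. w k * E k * (y - mu k) $ i)"
  define S1j where "S1j = (\<Sum>k\<in>UNIV. w k * E k * (y - mu k) $ j)"
  define S2 where "S2 = (\<Sum>k\<in>UNIV. w k * E k * (y - mu k) $ i * (y - mu k) $ j)"
  have Z0: "Z y = Z0" by (simp add: Z_def Z0_def E_def)
  have N0: "N y = S1i" by (simp add: N_def S1i_def E_def)
  have e1: "(\<Sum>k\<in>UNIV. w k * (E k * (- (axis j 1 \<bullet> (y - mu k)) / s))) = - S1j / s"
  proof -
    have "(\<Sum>k\<in>UNIV. w k * (E k * (- (axis j 1 \<bullet> (y - mu k)) / s))) = (\<Sum>k\<in>UNIV. - (w k * E k * (y - mu k) $ j) / s)"
      by (rule sum.cong) (simp_all add: inner_axis' algebra_simps)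
    also have "\<dots> = - S1j / s" by (simp add: S1j_def sum_divide_distrib sum_negf)
    finally show ?thesis .
  qed
  have e2: "(\<Sum>k\<in>UNIV. w k * (E k * (- (axis j 1 \<bullet> (y - mu k)) / s) * (y $ i - mu k $ i) + E k * axis j 1 $ i))
     = - S2 / s + (if i = j then 1 else 0) * Z0"
  proof -
    have "(\<Sum>k\<in>UNIV. w k * (E k * (- (axis j 1 \<bullet> (y - mu k)) / s) * (y $ i - mu k $ i) + E k * axis j 1 $ i))
       = (\<Sum>k\<in>UNIV. - (w k * E k * (y - mu k) $ i * (y - mu k) $ j) / s + (if i = j then 1 else 0) * (w k * E k))"
      by (rule sum.cong) (simp_all only: inner_axis', auto simp add: axis_def algebra_simps)
    also have "\<dots> = - S2 / s + (if i = j then 1 else 0) * Z0"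
      by (simp add: S2_def Z0_def sum.distrib sum_divide_distrib sum_negf sum_distrib_left sum_subtractf)
    finally show ?thesis .
  qed
  have Zp: "Z0 > 0" using Zpos[of y] Z0 by simp
  have "hessian (\<lambda>x. ln (gmix w mu s x)) y $ i $ j =
     - (((- S2 / s + (if i = j then 1 else 0) * Z0) * (s * Z0) - S1i * (s * (- S1j / s))) / ((s * Z0) * (s * Z0)))"
  proof -
    have "hessian (\<lambda>x. ln (gmix w mu s x)) y $ i $ j = frechet_derivative (\<lambda>y. grad (\<lambda>x. ln (gmix w mu s x)) y $ i) (at y) (axis j 1)"
      by (simp add: hessian_def)
    then show ?thesis
      unfolding g frechet_derivative_at[OF D, symmetric]
      by (simp only: e1 e2 Z0 N0)
  qed
  also have "\<dots> = - (if i = j then 1 else 0) / s + (S2 * Z0 - S1i * S1j) / (s^2 * Z0^2)"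
    using s Zp by (simp add: field_simps power2_eq_square)
  finally show ?thesis by (simp add: S2_def Z0_def S1i_def S1j_def)
qed


definition ex2 :: "(real \<Rightarrow> real) \<Rightarrow> real \<Rightarrow> real \<Rightarrow> bool" where
  "ex2 f a b \<longleftrightarrow> (\<lambda>s. f s - a - b / s) \<in> O(\<lambda>s. 1 / s^2)"

lemma ex2_cong: "ex2 f a b \<Longrightarrow> a = a' \<Longrightarrow> b = b' \<Longrightarrow> ex2 f a' b'" by simp

lemma ex2_const: "ex2 (\<lambda>_. c) c 0" by (simp add: ex2_def)

lemma ex2_lin: "ex2 (\<lambda>s. c + d / s) c d" by (simp add: ex2_def)

lemma ex2_exp: "ex2 (\<lambda>s. exp (- t / (2 * s))) 1 (- t / 2)"
  unfolding ex2_def by real_asymp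

lemma ex2_add:
  assumes "ex2 f a b" "ex2 g c d"
  shows "ex2 (\<lambda>s. f s + g s) (a + c) (b + d)"
proof -
  have "(\<lambda>s. (f s - a - b / s) + (g s - c - d / s)) \<in> O(\<lambda>s. 1 / s^2)"
    using assms unfolding ex2_def by (rule sum_in_bigo)
  also have "(\<lambda>s. (f s - a - b / s) + (g s - c - d / s)) = (\<lambda>s. f s + g s - (a + c) - (b + d) / s)"
    by (simp add: fun_eq_iff add_divide_distrib)
  finally show ?thesis unfolding ex2_def .
qed

lemma ex2_diff:
  assumes "ex2 f a b" "ex2 g c d"
  shows "ex2 (\<lambda>s. f s - g s) (a - c) (b - d)"
proof -
  have "(\<lambda>s. (f s - a - b / s) - (g s - c - d / s)) \<in> O(\<lambda>s. 1 / s^2)"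
    using assms unfolding ex2_def by (rule sum_in_bigo)
  also have "(\<lambda>s. (f s - a - b / s) - (g s - c - d / s)) = (\<lambda>s. f s - g s - (a - c) - (b - d) / s)"
    by (simp add: fun_eq_iff diff_divide_distrib)
  finally show ?thesis unfolding ex2_def .
qed

lemma ex2_bounded:
  assumes "ex2 f a b"
  shows "f \<in> O(\<lambda>_. 1)"
proof -
  have 1: "(\<lambda>s::real. 1 / s^2) \<in> O(\<lambda>_. 1)" by real_asymp
  have 2: "(\<lambda>s::real. b / s) \<in> O(\<lambda>_. 1)" by real_asymp
  have "(\<lambda>s. (f s - a - b / s) + (a + b / s)) \<in> O(\<lambda>_. 1)"
    using assms unfolding ex2_def
    by (rule sum_in_bigo(1)[OF landau_o.big_trans[OF _ 1] sum_in_bigo(1)[OF bigo_const 2]])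
  then show ?thesis by simp
qed

lemma ex2_mult:
  assumes f: "ex2 f a b" and g: "ex2 g c d"
  shows "ex2 (\<lambda>s. f s * g s) (a * c) (a * d + b * c)"
proof -
  have gb: "g \<in> O(\<lambda>_. 1)" by (rule ex2_bounded[OF g])
  have lb: "(\<lambda>s::real. a + b / s) \<in> O(\<lambda>_. 1)" by real_asymp
  have 3: "(\<lambda>s::real. b * d / s^2) \<in> O(\<lambda>s. 1 / s^2)" by real_asymp
  have "(\<lambda>s. (f s - a - b / s) * g s + ((g s - c - d / s) * (a + b / s) + b * d / s^2)) \<in> O(\<lambda>s. 1 / s^2)"
  proof -
    have A: "(\<lambda>s. (f s - a - b / s) * g s) \<in> O(\<lambda>s. 1 / s^2)"
      using f unfolding ex2_def by (rule landau_o.big_1_mult[OF _ gb])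
    have B: "(\<lambda>s. (g s - c - d / s) * (a + b / s)) \<in> O(\<lambda>s. 1 / s^2)"
      using g unfolding ex2_def by (rule landau_o.big_1_mult[OF _ lb])
    show ?thesis by (rule sum_in_bigo(1)[OF A sum_in_bigo(1)[OF B 3]])
  qed
  also have "(\<lambda>s. (f s - a - b / s) * g s + ((g s - c - d / s) * (a + b / s) + b * d / s^2))
     = (\<lambda>s. f s * g s - a * c - (a * d + b * c) / s)"
    by (rule ext, rename_tac s, case_tac "s = 0") (simp_all add: field_simps power2_eq_square)
  finally show ?thesis unfolding ex2_def .
qed

lemma ex2_sum:
  assumes "\<And>k. k \<in> A \<Longrightarrow> ex2 (f k) (a k) (b k)"
  shows "ex2 (\<lambda>s. \<Sum>k\<in>A. f k s) (\<Sum>k\<in>A. a k) (\<Sum>k\<in>A. b k)"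
  using assms
proof (induction A rule: infinite_finite_induct)
  case (infinite A) then show ?case by (simp add: ex2_const)
next
  case empty then show ?case by (simp add: ex2_const)
next
  case (insert x F)
  then show ?case by (simp add: ex2_add)
qed


lemma ex2_expsum:
  fixes c a :: "'k::finite \<Rightarrow> real"
  shows "ex2 (\<lambda>s. \<Sum>k\<in>UNIV. c k * exp (- a k / (2 * s))) (\<Sum>k\<in>UNIV. c k) (- (\<Sum>k\<in>UNIV. c k * a k) / 2)"
proof -
  have "ex2 (\<lambda>s. \<Sum>k\<in>UNIV. c k * exp (- a k / (2 * s))) (\<Sum>k\<in>UNIV. c k * 1) (\<Sum>k\<in>UNIV. c k * (- a k / 2) + 0 * 1)"
    by (intro ex2_sum ex2_mult ex2_const ex2_exp)
  then show ?thesis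
    by (rule ex2_cong) (simp_all add: sum_divide_distrib sum_negf)
qed

lemma asym:
  fixes w a p q :: "'k::finite \<Rightarrow> real"
  assumes wpos: "\<And>k. w k > 0" and w1: "(\<Sum>k\<in>UNIV. w k) = 1"
    and p0: "(\<Sum>k\<in>UNIV. w k * p k) = 0" and q0: "(\<Sum>k\<in>UNIV. w k * q k) = 0"
  defines "Z \<equiv> \<lambda>s. \<Sum>k\<in>UNIV. w k * exp (- a k / (2 * s))"
  defines "S1p \<equiv> \<lambda>s. \<Sum>k\<in>UNIV. w k * exp (- a k / (2 * s)) * p k"
  defines "S1q \<equiv> \<lambda>s. \<Sum>k\<in>UNIV. w k * exp (- a k / (2 * s)) * q k"
  defines "S2 \<equiv> \<lambda>s. \<Sum>k\<in>UNIV. w k * exp (- a k / (2 * s)) * p k * q k"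
  defines "Wc \<equiv> \<Sum>k\<in>UNIV. w k * p k * q k"
  defines "Qc \<equiv> \<Sum>k\<in>UNIV. w k * a k * p k * q k"
  defines "dd \<equiv> \<Sum>k\<in>UNIV. w k * a k"
  shows "(\<lambda>s. (S2 s * Z s - S1p s * S1q s) / (s^2 * (Z s)^2) - (Wc / s^2 + (dd * Wc - Qc) / (2 * s^3)))
           \<in> O(\<lambda>s. 1 / s^4)"
proof -
  have eZ: "ex2 Z 1 (- dd / 2)"
    unfolding Z_def dd_def using ex2_expsum[of w a] w1 by simp
  have fp: "S1p = (\<lambda>s. \<Sum>k\<in>UNIV. (w k * p k) * exp (- a k / (2 * s)))"
    unfolding S1p_def by (simp add: mult_ac)
  have fq: "S1q = (\<lambda>s. \<Sum>k\<in>UNIV. (w k * q k) * exp (- a k / (2 * s)))"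
    unfolding S1q_def by (simp add: mult_ac)
  have f2: "S2 = (\<lambda>s. \<Sum>k\<in>UNIV. (w k * p k * q k) * exp (- a k / (2 * s)))"
    unfolding S2_def by (simp add: mult_ac)
  obtain Pp where eP: "ex2 S1p 0 Pp"
    unfolding fp using ex2_expsum[of "\<lambda>k. w k * p k" a] p0 by auto
  obtain Pq where eQ: "ex2 S1q 0 Pq"
    unfolding fq using ex2_expsum[of "\<lambda>k. w k * q k" a] q0 by auto
  have e2: "ex2 S2 Wc (- Qc / 2)"
    unfolding f2 Wc_def Qc_def using ex2_expsum[of "\<lambda>k. w k * p k * q k" a]
    by (simp add: mult_ac)
  define T where "T = (\<lambda>s::real. Wc + ((dd * Wc - Qc) / 2) / s)"
  have eT: "ex2 T Wc ((dd * Wc - Qc) / 2)" unfolding T_def by (rule ex2_lin)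
  define N where "N = (\<lambda>s. S2 s * Z s - S1p s * S1q s - Z s * Z s * T s)"
  have "ex2 N 0 0"
    unfolding N_def
    by (rule ex2_cong[OF ex2_diff[OF ex2_diff[OF ex2_mult[OF e2 eZ] ex2_mult[OF eP eQ]] ex2_mult[OF ex2_mult[OF eZ eZ] eT]]])
       (simp_all add: field_simps)
  then have NO: "N \<in> O(\<lambda>s. 1 / s^2)" by (simp add: ex2_def)
  have Zpos: "Z s > 0" for s
    unfolding Z_def by (rule sum_pos) (auto intro: mult_pos_pos wpos)
  have Zlim: "(Z \<longlongrightarrow> 1) at_top"
  proof -
    have "((\<lambda>s. \<Sum>k\<in>UNIV. w k * exp (- a k / (2 * s))) \<longlongrightarrow> (\<Sum>k\<in>UNIV. w k * exp 0)) at_top"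
    proof (intro tendsto_sum tendsto_mult_left tendsto_exp)
      fix k show "((\<lambda>s::real. - a k / (2 * s)) \<longlongrightarrow> 0) at_top" by real_asymp
    qed
    then show ?thesis unfolding Z_def using w1 by simp
  qed
  have ZO: "(\<lambda>s. 1 / (Z s)^2) \<in> O(\<lambda>_. 1)"
  proof (rule bigoI_tendsto)
    show "((\<lambda>s. 1 / (Z s)^2 / 1) \<longlongrightarrow> 1) at_top"
      using tendsto_divide[OF tendsto_const tendsto_power[OF Zlim, of 2], of 1] by simp
  qed simp
  have "(\<lambda>s. N s * (1 / (Z s)^2)) \<in> O(\<lambda>s. 1 / s^2)"
    by (rule landau_o.big_1_mult[OF NO ZO])
  then have "(\<lambda>s. N s * (1 / (Z s)^2) * (1 / s^2)) \<in> O(\<lambda>s. 1 / s^2 * (1 / s^2))"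
    by (rule landau_o.big.mult) simp
  also have "(\<lambda>s::real. 1 / s^2 * (1 / s^2)) = (\<lambda>s. 1 / s^4)"
    by (rule ext) (simp add: power2_eq_square power4_eq_xxxx)
  finally have *: "(\<lambda>s. N s * (1 / (Z s)^2) * (1 / s^2)) \<in> O(\<lambda>s. 1 / s^4)" .
  have ev: "\<forall>\<^sub>F s in at_top. N s * (1 / (Z s)^2) * (1 / s^2) =
      (S2 s * Z s - S1p s * S1q s) / (s^2 * (Z s)^2) - (Wc / s^2 + (dd * Wc - Qc) / (2 * s^3))"
    using eventually_gt_at_top[of 0]
  proof eventually_elim
    case (elim s)
    have "Z s > 0" by (rule Zpos)
    with elim show ?case
      by (simp add: N_def T_def field_simps power2_eq_square power3_eq_cube)
  qed
  show ?thesis using * landau_o.big.in_cong[OF ev] by simp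
qed


lemma norm_mat_le_l1:
  fixes M :: "real ^ 'n ^ 'm"
  shows "norm M \<le> (\<Sum>i\<in>UNIV. \<Sum>j\<in>UNIV. \<bar>M $ i $ j\<bar>)"
proof -
  have "norm M = L2_set (\<lambda>i. norm (M $ i)) UNIV" by (simp add: norm_vec_def)
  also have "\<dots> \<le> (\<Sum>i\<in>UNIV. norm (M $ i))" by (rule L2_set_le_sum) simp
  also have "\<dots> \<le> (\<Sum>i\<in>UNIV. \<Sum>j\<in>UNIV. \<bar>M $ i $ j\<bar>)"
    by (rule sum_mono) (rule norm_le_l1_cart)
  finally show ?thesis .
qed

theorem mainTheorem19:
  fixes w :: "'k::finite \<Rightarrow> real" and mu :: "'k \<Rightarrow> real ^ 'd"
  assumes wpos: "\<And>k. w k > 0" and wsum: "(\<Sum>k\<in>UNIV. w k) = 1"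
  defines "xbar \<equiv> (\<Sum>k\<in>UNIV. w k *\<^sub>R mu k)"
  defines "nu \<equiv> (\<lambda>k. mu k - xbar)"
  defines "W \<equiv> (\<Sum>k\<in>UNIV. w k *\<^sub>R outer (nu k) (nu k))"
  defines "Q \<equiv> (\<Sum>k\<in>UNIV. (w k * (norm (nu k))\<^sup>2) *\<^sub>R outer (nu k) (nu k))"
  defines "d2 \<equiv> (\<Sum>k\<in>UNIV. w k * (norm (nu k))\<^sup>2)"
  defines "J \<equiv> (\<lambda>s::real. hessian (\<lambda>x. ln (gmix w mu s x)) xbar)"
  shows "\<exists>C S. \<forall>s\<ge>S. s > 0 \<and>
           norm (J s - ( - (1 / s) *\<^sub>R mat 1 + (1 / s ^ 2) *\<^sub>R W
                         + (1 / (2 * s ^ 3)) *\<^sub>R (d2 *\<^sub>R W - Q))) \<le> C / s ^ 4"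
proof -
  define M where "M = (\<lambda>s. J s - ( - (1 / s) *\<^sub>R mat 1 + (1 / s ^ 2) *\<^sub>R W
                         + (1 / (2 * s ^ 3)) *\<^sub>R (d2 *\<^sub>R W - Q)))"
  define a where "a = (\<lambda>k. (xbar - mu k) \<bullet> (xbar - mu k))"
  have nx: "(\<Sum>k\<in>UNIV. w k * (xbar - mu k) $ i) = 0" for i
  proof -
    have "(\<Sum>k\<in>UNIV. w k * (xbar - mu k) $ i) = (\<Sum>k\<in>UNIV. w k) * xbar $ i - (\<Sum>k\<in>UNIV. w k * mu k $ i)"
      by (simp add: algebra_simps sum_subtractf sum_distrib_left sum_distrib_right)
    also have "\<dots> = 0" using wsum by (simp add: xbar_def)
    finally show ?thesis .
  qed
  have entry: "(\<lambda>s. M s $ i $ j) \<in> O(\<lambda>s. 1 / s^4)" for i j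
  proof -
    define p where "p = (\<lambda>k. (xbar - mu k) $ i)"
    define q where "q = (\<lambda>k. (xbar - mu k) $ j)"
    have A: "(\<lambda>s. ((\<Sum>k\<in>UNIV. w k * exp (- a k / (2 * s)) * p k * q k) * (\<Sum>k\<in>UNIV. w k * exp (- a k / (2 * s)))
        - (\<Sum>k\<in>UNIV. w k * exp (- a k / (2 * s)) * p k) * (\<Sum>k\<in>UNIV. w k * exp (- a k / (2 * s)) * q k))
        / (s^2 * (\<Sum>k\<in>UNIV. w k * exp (- a k / (2 * s)))^2)
        - ((\<Sum>k\<in>UNIV. w k * p k * q k) / s^2 + ((\<Sum>k\<in>UNIV. w k * a k) * (\<Sum>k\<in>UNIV. w k * p k * q k)
           - (\<Sum>k\<in>UNIV. w k * a k * p k * q k)) / (2 * s^3))) \<in> O(\<lambda>s. 1 / s^4)"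
      by (rule asym[OF wpos wsum]) (use nx[of i] nx[of j] in \<open>simp_all add: p_def q_def\<close>)
    have na: "(norm (nu k))\<^sup>2 = a k" for k
      by (simp add: a_def nu_def power2_norm_eq_inner[symmetric] norm_minus_commute)
    have Wij: "W $ i $ j = (\<Sum>k\<in>UNIV. w k * p k * q k)"
      by (simp add: W_def outer_def p_def q_def nu_def algebra_simps)
    have Qij: "Q $ i $ j = (\<Sum>k\<in>UNIV. w k * a k * p k * q k)"
      using na by (simp add: Q_def outer_def p_def q_def nu_def algebra_simps)
    have d2a: "d2 = (\<Sum>k\<in>UNIV. w k * a k)" using na by (simp add: d2_def)
    have ev: "\<forall>\<^sub>F s in at_top. M s $ i $ j = ((\<Sum>k\<in>UNIV. w k * exp (- a k / (2 * s)) * p k * q k) * (\<Sum>k\<in>UNIV. w k * exp (- a k / (2 * s)))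
        - (\<Sum>k\<in>UNIV. w k * exp (- a k / (2 * s)) * p k) * (\<Sum>k\<in>UNIV. w k * exp (- a k / (2 * s)) * q k))
        / (s^2 * (\<Sum>k\<in>UNIV. w k * exp (- a k / (2 * s)))^2)
        - ((\<Sum>k\<in>UNIV. w k * p k * q k) / s^2 + ((\<Sum>k\<in>UNIV. w k * a k) * (\<Sum>k\<in>UNIV. w k * p k * q k)
           - (\<Sum>k\<in>UNIV. w k * a k * p k * q k)) / (2 * s^3))"
      using eventually_gt_at_top[of 0]
    proof eventually_elim
      case (elim s)
      have H: "J s $ i $ j = - (if i = j then 1 else 0) / s +
        ((\<Sum>k\<in>UNIV. w k * exp (- a k / (2 * s)) * p k * q k) * (\<Sum>k\<in>UNIV. w k * exp (- a k / (2 * s)))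
        - (\<Sum>k\<in>UNIV. w k * exp (- a k / (2 * s)) * p k) * (\<Sum>k\<in>UNIV. w k * exp (- a k / (2 * s)) * q k))
        / (s^2 * (\<Sum>k\<in>UNIV. w k * exp (- a k / (2 * s)))^2)"
        unfolding J_def hess_eq[OF wpos elim] by (simp add: a_def p_def q_def)
      show ?case
        unfolding M_def using H Wij Qij d2a
        by (simp add: mat_def)
    qed
    show ?thesis using A landau_o.big.in_cong[OF ev] by simp
  qed
  define G where "G = (\<lambda>s. \<Sum>i\<in>UNIV. \<Sum>j\<in>UNIV. \<bar>M s $ i $ j\<bar>)"
  have GO: "G \<in> O(\<lambda>s. 1 / s^4)"
    unfolding G_def by (intro big_sum_in_bigo) (simp add: entry)
  then obtain c where c: "c > 0" and ev: "\<forall>\<^sub>F s in at_top. norm (G s) \<le> c * norm (1 / s^4)"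
    by (elim landau_o.bigE)
  then obtain S0 where S0: "\<And>s. s \<ge> S0 \<Longrightarrow> norm (G s) \<le> c * norm (1 / s^4)"
    by (auto simp: eventually_at_top_linorder)
  show ?thesis
  proof (intro exI allI impI conjI)
    fix s :: real assume s: "max S0 1 \<le> s"
    then show "s > 0" by simp
    have "norm (M s) \<le> G s" unfolding G_def by (rule norm_mat_le_l1)
    also have "\<dots> \<le> norm (G s)" by simp
    also have "\<dots> \<le> c * norm (1 / s^4)" using S0 s by simp
    also have "\<dots> = c / s^4" using s by simp
    finally show "norm (J s - ( - (1 / s) *\<^sub>R mat 1 + (1 / s ^ 2) *\<^sub>R W
                         + (1 / (2 * s ^ 3)) *\<^sub>R (d2 *\<^sub>R W - Q))) \<le> c / s ^ 4"
      unfolding M_def .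
  qed
qed

end
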